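(* Let $d\ge1$, let $\{e^j\}_{j=1}^d$ be the standard basis of $\mathbb{R}^d$, let $\|\cdot\|_2$ be the Euclidean norm, $B_2=\{x\in\mathbb{R}^d:\|x\|_2\le1\}$, and $B^o_2(x,r)=\{y:\|y-x\|_2<r\}$. Define $a:=\frac{2}{5d+1}$, $x^j:=ae^j$ for $j=1,\dots,d$, and $x^{d+1}:=-a\sum_{j=1}^de^j$. Then for every $r>(1-a^2)^{1/2}$, $$B_2\subset\bigcup_{j=1}^{d+1}B^o_2(x^j,r).$$ *)

theory Defs
  imports "HOL-Analysis.Analysis"
begin

end

theory Submission imports Defs begin

lemma sq_sum_ge:
  fixes u :: "'a \<Rightarrow> real"
  assumes "finite I" "\<And>i. i \<in> I \<Longrightarrow> u i \<ge> 0"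
  shows "(\<Sum>i\<in>I. (u i)^2) \<le> (\<Sum>i\<in>I. u i)^2"
proof -
  have "(\<Sum>i\<in>I. u i)^2 = (\<Sum>i\<in>I. \<Sum>j\<in>I. u i * u j)"
    by (simp add: power2_eq_square sum_product)
  moreover have "(\<Sum>i\<in>I. (u i)^2) \<le> (\<Sum>i\<in>I. \<Sum>j\<in>I. u i * u j)"
  proof (rule sum_mono)
    fix i assume i: "i \<in> I"
    have "u i * u i \<le> (\<Sum>j\<in>I. u i * u j)"
      using member_le_sum[of i I "\<lambda>j. u i * u j"] i assms by auto
    then show "(u i)^2 \<le> (\<Sum>j\<in>I. u i * u j)" by (simp add: power2_eq_square)
  qed
  ultimately show ?thesis by simp
qed

lemma core:
  fixes x :: "'a \<Rightarrow> real" and I :: "'a set" and d a t S :: real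
  assumes fin: "finite I" and ne: "I \<noteq> {}"
    and dd: "d = real (card I)" and aa: "a = 2 / (5 * d + 1)"
    and tt: "t = (\<Sum>i\<in>I. (x i)^2)" and t1: "t \<le> 1"
    and SS: "S = (\<Sum>i\<in>I. x i)"
    and hj: "\<And>j. j \<in> I \<Longrightarrow> t - 2 * a * x j + a^2 > 1 - a^2"
    and hs: "t + 2 * a * S + a^2 * d > 1 - a^2"
  shows False
proof -
  have d1: "d \<ge> 1" using dd fin ne by (simp add: Suc_le_eq card_gt_0_iff)
  have a0: "a > 0" using aa d1 by simp
  have ad: "a * (5 * d + 1) = 2" using aa d1 by (simp add: field_simps)
  define m where "m = (t + 2*a^2 - 1) / (2*a)"
  define L where "L = (1 - a^2*(d+1) - t) / (2*a)"
  have xm: "x j < m" if "j \<in> I" for j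
  proof -
    have "2*a*x j < t + 2*a^2 - 1" using hj[OF that] by simp
    then show ?thesis unfolding m_def using a0 by (simp add: field_simps)
  qed
  have SL: "S > L"
  proof -
    have "2*a*S > 1 - a^2*(d+1) - t" using hs by (simp add: algebra_simps)
    then show ?thesis unfolding L_def using a0 by (simp add: field_simps)
  qed
  have t0: "t \<ge> 0" using tt by (simp add: sum_nonneg)
  show False
  proof (cases "m \<le> 0")
    case True
    have neg: "x i < 0" if "i \<in> I" for i using xm[OF that] True by simp
    have "t \<le> (\<Sum>i\<in>I. - x i)^2"
      using sq_sum_ge[of I "\<lambda>i. - x i"] fin neg tt by fastforce
    also have "\<dots> = S^2" by (simp add: SS sum_negf)
    finally have tS: "t \<le> S^2" .
    have "0 < (\<Sum>i\<in>I. - x i)" using neg fin ne by (intro sum_pos) auto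
    hence S0: "S < 0" by (simp add: SS sum_negf)
    have "S^2 < L^2" using SL S0 by (smt (verit) power2_less_eq_zero_iff power_mono_iff zero_less_numeral real_sqrt_less_iff real_sqrt_abs)
    hence tL: "t < L^2" using tS by simp
    have tm: "t \<le> 1 - 2*a^2" using True a0 unfolding m_def by (simp add: field_simps)
    have L0: "L < 0" using SL S0 by simp
    define w where "w = t - 1 + a^2*(d+1)"
    have s0: "w > 0" using L0 a0 unfolding L_def w_def by (simp add: field_simps)
    have s1: "w \<le> a^2*(d-1)" using tm unfolding w_def by (simp add: algebra_simps)
    have "L^2 = w^2 / (4*a^2)" unfolding L_def w_def by (simp add: power_divide power2_eq_square algebra_simps)
    hence "4*a^2*L^2 = w^2" using a0 by (simp add: field_simps)
    moreover have "4*a^2*t < 4*a^2*L^2" using tL a0 by simp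
    ultimately have "4*a^2*t < w^2" by simp
    moreover have "w^2 \<le> (a^2*(d-1))^2" using s0 s1 by (simp add: power_mono)
    moreover have "4*a^2*t = 4*a^2*w + 4*a^2*(1 - a^2*(d+1))" unfolding w_def by (simp add: algebra_simps)
    moreover have "4*a^2*w > 0" using s0 a0 by simp
    ultimately have "4*a^2*(1 - a^2*(d+1)) < (a^2*(d-1))^2" by linarith
    hence "a^2 * 4 < a^2 * (a^2*((d-1)^2 + 4*(d+1)))"
      by (simp add: power2_eq_square algebra_simps)
    moreover have "a^2 > 0" using a0 by simp
    ultimately have "4 < a^2*((d-1)^2 + 4*(d+1))" using mult_less_cancel_left_pos by blast
    also have "a^2 = 4 / (5*d+1)^2" using aa by (simp add: power_divide)
    finally have "4*(5*d+1)^2 < 4*((d-1)^2 + 4*(d+1))" using d1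
      by (simp add: field_simps)
    moreover have "d*d \<ge> 1" using mult_mono[OF d1 d1] d1 by simp
    ultimately show False using d1 by (simp add: power2_eq_square algebra_simps)
  next
    case False
    define u where "u i = m - x i" for i
    define U where "U = (\<Sum>i\<in>I. u i)"
    have u0: "u i > 0" if "i \<in> I" for i using xm[OF that] u_def by simp
    have U0: "U > 0" unfolding U_def using u0 fin ne by (simp add: sum_pos)
    have US: "U = d*m - S" unfolding U_def u_def SS dd by (simp add: sum_subtractf)
    have "t = (\<Sum>i\<in>I. (m - u i)^2)" unfolding tt u_def by simp
    also have "\<dots> = (\<Sum>i\<in>I. m^2 - 2*m*u i + (u i)^2)"
      by (simp add: power2_eq_square algebra_simps)
    also have "\<dots> = d*m^2 - 2*m*U + (\<Sum>i\<in>I. (u i)^2)"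
      by (simp add: sum.distrib sum_subtractf sum_distrib_left U_def dd)
    also have "\<dots> \<le> d*m^2 + U^2"
      using sq_sum_ge[of I u] fin u0 False U0 U_def
      by (smt (verit) less_eq_real_def mult_pos_pos not_le)
    finally have tU: "t \<le> d*m^2 + U^2" .
    have mpos: "m > 0" using False by simp
    have ma: "m \<le> a" using t1 a0 unfolding m_def by (simp add: field_simps power2_eq_square)
    have tm: "t > 1 - 2*a^2" using mpos a0 unfolding m_def by (simp add: field_simps)
    have Lb: "-L \<le> a*(d+1)/2" using t1 a0 t0 unfolding L_def
      by (simp add: field_simps power2_eq_square)
    have "d*m \<le> d*a" using ma d1 by (simp add: mult_left_mono)
    hence UK: "U \<le> a*(3*d+1)/2" using US SL Lb by (simp add: algebra_simps)
    have "U^2 \<le> (a*(3*d+1)/2)^2" using UK U0 by (simp add: power_mono)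
    moreover have "d*m^2 \<le> d*a^2" using ma mpos d1 by (simp add: power_mono)
    ultimately have "1 - 2*a^2 < d*a^2 + (a*(3*d+1)/2)^2" using tU tm by simp
    hence "4 < a^2 * (8 + 4*d + (3*d+1)^2)"
      by (simp add: power2_eq_square field_simps)
    also have "a^2 = 4 / (5*d+1)^2" using aa by (simp add: power_divide)
    finally have "4*(5*d+1)^2 < 4*(8 + 4*d + (3*d+1)^2)" using d1
      by (simp add: field_simps)
    moreover have "d*d \<ge> 1" using mult_mono[OF d1 d1] d1 by simp
    ultimately show False using d1 by (simp add: power2_eq_square algebra_simps)
  qed
qed


lemma dist_sq_vec: "(dist (y::real^'n) x)^2 = (\<Sum>i\<in>UNIV. (y$i - x$i)^2)"
  by (simp only: dist_norm power2_norm_eq_inner) (simp add: inner_vec_def power2_eq_square)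

lemma norm_sq_vec: "(norm (x::real^'n))^2 = (\<Sum>i\<in>UNIV. (x$i)^2)"
  by (simp only: power2_norm_eq_inner) (simp add: inner_vec_def power2_eq_square)

theorem proposition3p2:
  fixes r :: real
  defines "d \<equiv> CARD('n::finite)"
  defines "a \<equiv> 2 / (5 * real d + 1)"
  assumes "r > sqrt (1 - a\<^sup>2)"
  shows "cball (0 :: real ^ 'n) 1 \<subseteq>
           (\<Union>j\<in>UNIV. ball (a *\<^sub>R axis j 1) r)
           \<union> ball (- a *\<^sub>R (\<Sum>j\<in>UNIV. axis j 1)) r"
proof
  fix x :: "real ^ 'n"
  assume xb: "x \<in> cball 0 1"
  show "x \<in> (\<Union>j\<in>UNIV. ball (a *\<^sub>R axis j 1) r) \<union> ball (- a *\<^sub>R (\<Sum>j\<in>UNIV. axis j 1)) r"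
  proof (rule ccontr)
    assume nx: "\<not> ?thesis"
    have a0: "a > 0" unfolding a_def by simp
    have a1: "a \<le> 1/3" unfolding a_def d_def
      using card_ge_0_finite[of "UNIV::'n set"] by (simp add: field_simps)
    have "a^2 \<le> 1" using a0 a1 by (simp add: power_le_one)
    hence q: "(sqrt (1 - a^2))^2 = 1 - a^2" by simp
    have r0: "r > 0" using assms(3) real_sqrt_ge_zero[of "1 - a^2"] \<open>a^2 \<le> 1\<close> by linarith
    have "(sqrt (1 - a^2))^2 < r^2"
      using power_strict_mono[OF assms(3) real_sqrt_ge_zero, of 2] \<open>a^2 \<le> 1\<close> by simp
    hence r2: "r^2 > 1 - a^2" using q by simp
    define t where "t = (\<Sum>i\<in>UNIV. (x$i)^2)"
    define S where "S = (\<Sum>i\<in>UNIV. x$i)"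
    have t1: "t \<le> 1"
    proof -
      have "norm x \<le> 1" using xb by simp
      hence "(norm x)^2 \<le> 1" using norm_ge_zero by (simp add: power_le_one)
      thus ?thesis unfolding t_def norm_sq_vec .
    qed
    have hj: "t - 2 * a * x$j + a^2 > 1 - a^2" for j
    proof -
      have "\<not> dist (a *\<^sub>R axis j 1) x < r" using nx by auto
      hence "dist (a *\<^sub>R axis j 1) x \<ge> r" by (simp add: not_less)
      hence "(dist (a *\<^sub>R axis j 1) x)^2 \<ge> r^2"
        using r0 by (simp add: power_mono)
      moreover have "(dist (a *\<^sub>R axis j 1) x)^2 = t - 2 * a * x$j + a^2"
      proof -
        have "(dist (a *\<^sub>R axis j 1) x)^2 = (\<Sum>i\<in>UNIV. (x$i)^2 + (if i = j then a^2 - 2*a*x$i else 0))"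
          unfolding dist_sq_vec
          by (rule sum.cong) (auto simp: axis_def power2_eq_square algebra_simps)
        also have "\<dots> = t - 2 * a * x$j + a^2"
          by (simp add: sum.distrib t_def)
        finally show ?thesis .
      qed
      ultimately show ?thesis using r2 by simp
    qed
    have hs: "t + 2 * a * S + a^2 * real d > 1 - a^2"
    proof -
      let ?w = "- a *\<^sub>R (\<Sum>j\<in>UNIV. axis j 1) :: real^'n"
      have "\<not> dist ?w x < r" using nx by auto
      hence "dist ?w x \<ge> r" by (simp add: not_less)
      hence "(dist ?w x)^2 \<ge> r^2"
        using r0 by (simp add: power_mono)
      moreover have "(dist ?w x)^2 = t + 2 * a * S + a^2 * real d"
      proof -
        have wi: "?w $ i = - a" for i
          by (simp add: sum_component axis_def)
        have "(dist ?w x)^2 = (\<Sum>i\<in>UNIV. (x$i)^2 + 2*a*x$i + a^2)"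
          unfolding dist_sq_vec wi by (rule sum.cong) (auto simp: power2_eq_square algebra_simps)
        also have "\<dots> = t + 2 * a * S + a^2 * real d"
          by (simp add: sum.distrib t_def S_def sum_distrib_left d_def)
        finally show ?thesis .
      qed
      ultimately show ?thesis using r2 by simp
    qed
    show False
      using core[of UNIV "real d" a t "\<lambda>i. x$i" S] hj hs t1
      by (simp add: d_def a_def t_def S_def)
  qed
qed

end
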